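(* Let $[\mathbf{G}]$ be a random field belonging to $\mathcal{C}^{2,S}_n$ and let $[\mathbf{K}_0]$ be the random field in $\mathcal{C}^+_n$ such that $[\mathbf{K}_0(\mathbf{x})]=\mathbb{L}([\mathbf{G}(\mathbf{x})])$ for all $\mathbf{x}\in D$. Then: (i) there exist two real numbers $0<\gamma_0<+\infty$ and $0<\gamma_1<+\infty$ such that for all $\mathbf{x}\in D$, $\|\mathbf{K}_0(\mathbf{x})\|_F\le\gamma_0+\gamma_1\|\mathbf{G}(\mathbf{x})\|_F^2$ almost surely; moreover $E\{\|\mathbf{K}_0(\mathbf{x})\|_F\}<+\infty$, and if $E\{\|\mathbf{G}(\mathbf{x})\|_F^4\}<+\infty$ then $E\{\|\mathbf{K}_0(\mathbf{x})\|_F^2\}<+\infty$; (ii) if $\|\mathbf{G}(\mathbf{x})\|_F\le\beta_G<+\infty$ almost surely for all $\mathbf{x}\in D$, where $\beta_G$ is a positive random variable independent of $\mathbf{x}$, then $\|\mathbf{K}_0(\mathbf{x})\|_F\le\beta_0<+\infty$ almost surely for all $\mathbf{x}\in D$, where $\beta_0=\gamma_0+\gamma_1\beta_G^2$ is a positive random variable independent of $\mathbf{x}$.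
   Context: Let $d,n\ge1$ be integers and $D\subset\mathbb{R}^d$ a bounded open domain. $\mathbb{M}_n^+(\mathbb{R})$ (resp. $\mathbb{M}_n^S(\mathbb{R})$) is the set of symmetric positive-definite (resp. symmetric) real $n\times n$ matrices; $\|\cdot\|_F$ is the Frobenius norm. $\mathcal{C}^+_n$ is the set of random fields on $D$ (on a probability space) with values in $\mathbb{M}_n^+(\mathbb{R})$; $\mathcal{C}^{2,S}_n$ is the set of random fields $[\mathbf{G}]$ on $D$ with values in $\mathbb{M}_n^S(\mathbb{R})$ with $E\{\|\mathbf{G}(\mathbf{x})\|_F^2\}<+\infty$ for all $\mathbf{x}$. For each real $a>0$, let $g\mapsto h(g;a)$ be a function from $\mathbb{R}$ into $\mathbb{R}^+$ such that (i) $h(\cdot;a)$ is strictly monotonically increasing on $\mathbb{R}$, and (ii) there exist reals $0<c_h<+\infty$ and $0<c_a<+\infty$ with $h(g;a)\le c_a+c_h g^2$ for all $g\in\mathbb{R}$. Fix positive reals $a_1,\dots,a_n$. For $[G]\in\mathbb{M}_n^S(\mathbb{R})$, let $\mathcal{L}([G])$ be the upper triangular $n\times n$ real matrix with $[\mathcal{L}([G])]_{jj'}=[G]_{jj'}$ for $1\le j<j'\le n$ and $[\mathcal{L}([G])]_{jj}=\sqrt{h([G]_{jj};a_j)}$ for $1\le j\le n$, and set $\mathbb{L}([G])=\mathcal{L}([G])^T\mathcal{L}([G])$. *)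

theory Defs
  imports "HOL-Probability.Probability"
begin

definition frob :: "real^'n^'m \<Rightarrow> real" where
  "frob A = sqrt (\<Sum>i\<in>UNIV. \<Sum>j\<in>UNIV. (A$i$j)^2)"

text \<open>Indices range over a finite linearly ordered type (standing for 1..n).\<close>
definition calL :: "(real \<Rightarrow> real \<Rightarrow> real) \<Rightarrow> ('n::{finite,linorder} \<Rightarrow> real)
    \<Rightarrow> ((real, 'n) vec, 'n) vec \<Rightarrow> ((real, 'n) vec, 'n) vec" where
  "calL h a G = (\<chi> j j'. if j < j' then G$j$j'
                         else if j = j' then sqrt (h (G$j$j) (a j)) else 0)"

definition bbL :: "(real \<Rightarrow> real \<Rightarrow> real) \<Rightarrow> ('n::{finite,linorder} \<Rightarrow> real)
    \<Rightarrow> ((real, 'n) vec, 'n) vec \<Rightarrow> ((real, 'n) vec, 'n) vec" where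
  "bbL h a G = transpose (calL h a G) ** calL h a G"

end

theory Submission imports Defs begin

definition ss :: "real^'n^'m \<Rightarrow> real" where
  "ss A = (\<Sum>i\<in>UNIV. \<Sum>j\<in>UNIV. (A$i$j)^2)"

lemma ss_nonneg: "ss A \<ge> 0" unfolding ss_def by (intro sum_nonneg) auto

lemma frob_ss: "frob A = sqrt (ss A)" unfolding frob_def ss_def ..

lemma frob_sq: "(frob A)^2 = ss A" by (simp add: frob_ss ss_nonneg)

lemma entry_le: "\<bar>(transpose L ** L)$i$j\<bar> \<le> ss (L::real^'n^'n)"
proof -
  have "\<bar>(transpose L ** L)$i$j\<bar> = \<bar>\<Sum>k\<in>UNIV. L$k$i * L$k$j\<bar>"
    by (simp add: matrix_matrix_mult_def transpose_def)
  also have "\<dots> \<le> (\<Sum>k\<in>UNIV. \<bar>L$k$i * L$k$j\<bar>)" by (rule sum_abs)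
  also have "\<dots> \<le> (\<Sum>k\<in>UNIV. ((L$k$i)^2 + (L$k$j)^2) / 2)"
  proof (intro sum_mono)
    fix k
    have "0 \<le> (\<bar>L$k$i\<bar> - \<bar>L$k$j\<bar>)^2" by simp
    then show "\<bar>L$k$i * L$k$j\<bar> \<le> ((L$k$i)^2 + (L$k$j)^2) / 2"
      by (simp add: power2_eq_square abs_mult algebra_simps)
  qed
  also have "\<dots> = ((\<Sum>k\<in>UNIV. (L$k$i)^2) + (\<Sum>k\<in>UNIV. (L$k$j)^2)) / 2"
    unfolding sum_divide_distrib[symmetric] sum.distrib ..
  also have "\<dots> \<le> (ss L + ss L) / 2"
  proof -
    have "\<And>c. (\<Sum>k\<in>UNIV. (L$k$c)^2) \<le> ss L"
    proof -
      fix c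
      have "\<And>k. (L$k$c)^2 \<le> (\<Sum>j\<in>UNIV. (L$k$j)^2)"
        by (rule member_le_sum) auto
      then show "(\<Sum>k\<in>UNIV. (L$k$c)^2) \<le> ss L" unfolding ss_def by (rule sum_mono)
    qed
    then show ?thesis by (intro divide_right_mono add_mono) auto
  qed
  finally show ?thesis by simp
qed

lemma frob_prod_le: "frob (transpose L ** L) \<le> real CARD('n) * ss (L::real^'n^'n)"
proof -
  have "ss (transpose L ** L) \<le> (\<Sum>i\<in>(UNIV::'n set). \<Sum>j\<in>(UNIV::'n set). (ss L)^2)"
    unfolding ss_def[of "transpose L ** L"]
  proof (intro sum_mono)
    fix i j
    have "\<bar>(transpose L ** L)$i$j\<bar> \<le> \<bar>ss L\<bar>" using entry_le[of L i j] ss_nonneg[of L] by simp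
    then show "((transpose L ** L)$i$j)^2 \<le> (ss L)^2" by (simp add: power2_le_iff_abs_le abs_le_square_iff)
  qed
  also have "\<dots> = (real CARD('n) * ss L)^2" by (simp add: power2_eq_square)
  finally have "sqrt (ss (transpose L ** L)) \<le> sqrt ((real CARD('n) * ss L)^2)"
    by (rule real_sqrt_le_mono)
  also have "\<dots> = real CARD('n) * ss L" using ss_nonneg[of L] by simp
  finally show ?thesis by (simp add: frob_ss)
qed

lemma calL_le:
  fixes G :: "((real, 'k::{finite,linorder}) vec, 'k) vec" and a ca cb :: "'k \<Rightarrow> real" and h :: "real \<Rightarrow> real \<Rightarrow> real" and B :: real
  assumes hn: "\<And>j g. h g (a j) \<ge> 0"
    and hb: "\<And>j g. h g (a j) \<le> ca j + cb j * g^2"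
    and B: "\<And>j. cb j \<le> B" "1 \<le> B"
  shows "ss (calL h a G) \<le> (\<Sum>j\<in>UNIV. ca j) + B * ss G"
proof -
  have "ss (calL h a G) \<le> (\<Sum>j\<in>UNIV. \<Sum>j'\<in>UNIV. (if j = j' then ca j else 0) + B * (G$j$j')^2)"
    unfolding ss_def
  proof (intro sum_mono)
    fix j j' :: 'k
    show "(calL h a G $ j $ j')^2 \<le> (if j = j' then ca j else 0) + B * (G$j$j')^2"
    proof (cases "j < j'")
      case True
      have "(G$j$j')^2 \<le> B * (G$j$j')^2" using B(2) by (simp add: mult_le_cancel_right1)
      with True show ?thesis by (auto simp: calL_def)
    next
      case False
      show ?thesis
      proof (cases "j = j'")
        case True
        have "cb j * (G$j$j)^2 \<le> B * (G$j$j)^2" using B(1)[of j] by (simp add: mult_right_mono)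
        with True False hn[where j=j and g="G$j$j"] hb[where j=j and g="G$j$j"] show ?thesis by (simp add: calL_def)
      next
        case F2: False
        have "0 \<le> B * (G$j$j')^2" using B(2) by simp
        with False F2 show ?thesis by (simp add: calL_def)
      qed
    qed
  qed
  also have "\<dots> = (\<Sum>j\<in>UNIV. ca j) + B * ss G"
    by (simp add: sum.distrib ss_def sum_distrib_left)
  finally show ?thesis .
qed


lemma comp_meas:
  fixes F :: "'w \<Rightarrow> real^'n^'m"
  assumes "F \<in> borel_measurable M"
  shows "(\<lambda>\<omega>. F \<omega> $ i $ j) \<in> borel_measurable M"
proof -
  have "continuous_on UNIV (\<lambda>v::real^'n^'m. v $ i $ j)"
    by (intro continuous_intros)
  then show ?thesis
    using measurable_compose[OF assms borel_measurable_continuous_onI] by simp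
qed

lemma frob_bbL_meas:
  fixes F :: "'w \<Rightarrow> ((real, 'k::{finite,linorder}) vec, 'k) vec"
  assumes "F \<in> borel_measurable M"
    and hm: "\<And>j. (\<lambda>g. h g (a j)) \<in> borel_measurable borel"
  shows "(\<lambda>\<omega>. frob (bbL h a (F \<omega>))) \<in> borel_measurable M"
proof -
  have c: "\<And>i j. (\<lambda>\<omega>. F \<omega> $ i $ j) \<in> borel_measurable M" by (rule comp_meas[OF assms(1)])
  have e: "\<And>k i. (\<lambda>\<omega>. calL h a (F \<omega>) $ k $ i) \<in> borel_measurable M"
  proof -
    fix k i
    have hh: "(\<lambda>\<omega>. h (F \<omega> $ k $ k) (a k)) \<in> borel_measurable M"
      using measurable_compose[OF c hm] by simp
    show "(\<lambda>\<omega>. calL h a (F \<omega>) $ k $ i) \<in> borel_measurable M"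
      unfolding calL_def using c hh by simp
  qed
  show ?thesis
    unfolding frob_def bbL_def matrix_matrix_mult_def transpose_def
    using e by simp
qed

theorem proposition2:
  fixes M :: "'w measure"
    and D :: "(real^'d) set"
    and G :: "real^'d \<Rightarrow> 'w \<Rightarrow> ((real, 'n::{finite,linorder}) vec, 'n) vec"
    and h :: "real \<Rightarrow> real \<Rightarrow> real"
    and a :: "'n \<Rightarrow> real"
  assumes "prob_space M"
    and "bounded D" and "open D"
    and h_nonneg: "\<And>\<alpha> g. \<alpha> > 0 \<Longrightarrow> h g \<alpha> \<ge> 0"
    and h_mono: "\<And>\<alpha>. \<alpha> > 0 \<Longrightarrow> strict_mono (\<lambda>g. h g \<alpha>)"
    and h_bound: "\<And>\<alpha>. \<alpha> > 0 \<Longrightarrow>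
        \<exists>c_h c_a. 0 < c_h \<and> 0 < c_a \<and> (\<forall>g. h g \<alpha> \<le> c_a + c_h * g^2)"
    and a_pos: "\<And>j. a j > 0"
    and G_meas: "\<And>x. x \<in> D \<Longrightarrow> G x \<in> borel_measurable M"
    and G_sym: "\<And>x \<omega>. x \<in> D \<Longrightarrow> \<omega> \<in> space M \<Longrightarrow> transpose (G x \<omega>) = G x \<omega>"
    and G_L2: "\<And>x. x \<in> D \<Longrightarrow> integrable M (\<lambda>\<omega>. (frob (G x \<omega>))^2)"
  defines "K0 \<equiv> (\<lambda>x \<omega>. bbL h a (G x \<omega>))"
  shows "\<exists>\<gamma>0 \<gamma>1. 0 < \<gamma>0 \<and> 0 < \<gamma>1 \<and>
     (\<forall>x\<in>D. (AE \<omega> in M. frob (K0 x \<omega>) \<le> \<gamma>0 + \<gamma>1 * (frob (G x \<omega>))^2)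
            \<and> integrable M (\<lambda>\<omega>. frob (K0 x \<omega>))
            \<and> (integrable M (\<lambda>\<omega>. (frob (G x \<omega>))^4)
                 \<longrightarrow> integrable M (\<lambda>\<omega>. (frob (K0 x \<omega>))^2))) \<and>
     (\<forall>\<beta>G :: 'w \<Rightarrow> real.
        \<beta>G \<in> borel_measurable M \<and> (\<forall>\<omega>\<in>space M. 0 < \<beta>G \<omega>) \<and>
        (\<forall>x\<in>D. AE \<omega> in M. frob (G x \<omega>) \<le> \<beta>G \<omega>)
        \<longrightarrow> (\<forall>x\<in>D. AE \<omega> in M. frob (K0 x \<omega>) \<le> \<gamma>0 + \<gamma>1 * (\<beta>G \<omega>)^2))"
  proof -
  interpret P: prob_space M by fact
  from h_bound obtain ca' cb' where cc:
    "\<And>\<alpha>. \<alpha> > 0 \<Longrightarrow> 0 < cb' \<alpha> \<and> 0 < ca' \<alpha> \<and> (\<forall>g. h g \<alpha> \<le> ca' \<alpha> + cb' \<alpha> * g^2)"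
    by metis
  define ca where "ca j = ca' (a j)" for j
  define cb where "cb j = cb' (a j)" for j
  define A where "A = 1 + (\<Sum>j\<in>UNIV. ca j)"
  define B where "B = 1 + (\<Sum>j\<in>UNIV. cb j)"
  define n where "n = real CARD('n)"
  have n_pos: "n > 0" unfolding n_def by simp
  have ca_pos: "\<And>j. ca j > 0" and cb_pos: "\<And>j. cb j > 0"
    using cc a_pos unfolding ca_def cb_def by auto
  have hb: "\<And>j g. h g (a j) \<le> ca j + cb j * g^2"
    using cc a_pos unfolding ca_def cb_def by auto
  have hn: "\<And>j g. h g (a j) \<ge> 0" using h_nonneg a_pos by auto
  have cbB: "\<And>j. cb j \<le> B"
  proof -
    fix j
    have "cb j \<le> (\<Sum>j\<in>UNIV. cb j)" by (rule member_le_sum) (use cb_pos in \<open>auto intro: less_imp_le\<close>)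
    then show "cb j \<le> B" unfolding B_def by simp
  qed
  have A_pos: "A > 0" unfolding A_def using ca_pos by (simp add: sum_pos2 add_pos_nonneg sum_nonneg less_imp_le)
  have B1: "1 \<le> B" unfolding B_def using cb_pos by (simp add: sum_nonneg less_imp_le)
  have key: "\<And>Gm. frob (bbL h a Gm) \<le> n * A + n * B * (frob Gm)^2"
  proof -
    fix Gm :: "((real, 'n) vec, 'n) vec"
    have "frob (bbL h a Gm) \<le> n * ss (calL h a Gm)"
      unfolding bbL_def n_def by (rule frob_prod_le)
    also have "\<dots> \<le> n * ((\<Sum>j\<in>UNIV. ca j) + B * ss Gm)"
      using calL_le[of h a ca cb B Gm, OF hn hb cbB B1] n_pos by simp
    also have "\<dots> \<le> n * A + n * B * (frob Gm)^2"
      using n_pos by (simp add: frob_sq A_def algebra_simps)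
    finally show "frob (bbL h a Gm) \<le> n * A + n * B * (frob Gm)^2" .
  qed
  have hm: "\<And>j. (\<lambda>g. h g (a j)) \<in> borel_measurable borel"
    using h_mono a_pos by (intro borel_measurable_mono) (auto intro: strict_mono_mono)
  have frob_nn: "\<And>X::((real, 'n) vec, 'n) vec. frob X \<ge> 0" by (simp add: frob_ss ss_nonneg)
  show ?thesis
  proof (intro exI conjI ballI allI impI)
    show "0 < n * A" "0 < n * B" using n_pos A_pos B1 by auto
  next
    fix x assume x: "x \<in> D"
    show "AE \<omega> in M. frob (K0 x \<omega>) \<le> n * A + n * B * (frob (G x \<omega>))^2"
      unfolding K0_def using key by simp
    have meas: "(\<lambda>\<omega>. frob (K0 x \<omega>)) \<in> borel_measurable M"
      unfolding K0_def by (rule frob_bbL_meas[where h=h and a=a, OF G_meas[OF x] hm])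
    have i1: "integrable M (\<lambda>\<omega>. n * A + n * B * (frob (G x \<omega>))^2)"
      using G_L2[OF x] by auto
    show "integrable M (\<lambda>\<omega>. frob (K0 x \<omega>))"
    proof (rule Bochner_Integration.integrable_bound[OF i1 meas])
      show "AE \<omega> in M. norm (frob (K0 x \<omega>)) \<le> norm (n * A + n * B * (frob (G x \<omega>))^2)"
        unfolding K0_def using key frob_nn n_pos A_pos B1 by (auto intro!: AE_I2)
    qed
    assume i4: "integrable M (\<lambda>\<omega>. (frob (G x \<omega>))^4)"
    have i2: "integrable M (\<lambda>\<omega>. 2 * (n * A)^2 + 2 * (n * B)^2 * (frob (G x \<omega>))^4)"
      using i4 by auto
    show "integrable M (\<lambda>\<omega>. (frob (K0 x \<omega>))^2)"
    proof (rule Bochner_Integration.integrable_bound[OF i2])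
      show "(\<lambda>\<omega>. (frob (K0 x \<omega>))^2) \<in> borel_measurable M" using meas by simp
      show "AE \<omega> in M. norm ((frob (K0 x \<omega>))^2) \<le> norm (2 * (n * A)^2 + 2 * (n * B)^2 * (frob (G x \<omega>))^4)"
      proof (intro AE_I2)
        fix \<omega>
        define t where "t = (frob (G x \<omega>))^2"
        have t0: "t \<ge> 0" unfolding t_def by simp
        have "(frob (K0 x \<omega>))^2 \<le> (n * A + n * B * t)^2"
          unfolding K0_def t_def using key frob_nn by (intro power_mono) auto
        also have "\<dots> \<le> 2 * (n * A)^2 + 2 * (n * B)^2 * t^2"
          using sum_squares_ge_zero[of "n*A - n*B*t" 0] by (simp add: power2_eq_square algebra_simps)
        finally have "(frob (K0 x \<omega>))^2 \<le> 2 * (n * A)^2 + 2 * (n * B)^2 * (frob (G x \<omega>))^4"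
          unfolding t_def by (simp add: power_mult_distrib flip: power_mult)
        moreover have "0 \<le> 2 * (n * A)^2 + 2 * (n * B)^2 * (frob (G x \<omega>))^4" by simp
        ultimately show "norm ((frob (K0 x \<omega>))^2) \<le> norm (2 * (n * A)^2 + 2 * (n * B)^2 * (frob (G x \<omega>))^4)"
          by simp
      qed
    qed
  next
    fix \<beta>G :: "'w \<Rightarrow> real" and x
    assume H: "\<beta>G \<in> borel_measurable M \<and> (\<forall>\<omega>\<in>space M. 0 < \<beta>G \<omega>) \<and>
        (\<forall>x\<in>D. AE \<omega> in M. frob (G x \<omega>) \<le> \<beta>G \<omega>)" and x: "x \<in> D"
    from H x have ae: "AE \<omega> in M. frob (G x \<omega>) \<le> \<beta>G \<omega>" by blast
    then show "AE \<omega> in M. frob (K0 x \<omega>) \<le> n * A + n * B * (\<beta>G \<omega>)^2"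
    proof (rule AE_mp, intro AE_I2 impI)
      fix \<omega> assume le: "frob (G x \<omega>) \<le> \<beta>G \<omega>"
      have "(frob (G x \<omega>))^2 \<le> (\<beta>G \<omega>)^2" using le frob_nn by (intro power_mono) auto
      then have "n * B * (frob (G x \<omega>))^2 \<le> n * B * (\<beta>G \<omega>)^2"
        using n_pos B1 by (intro mult_left_mono) auto
      then show "frob (K0 x \<omega>) \<le> n * A + n * B * (\<beta>G \<omega>)^2"
        unfolding K0_def using key[of "G x \<omega>"] by linarith
    qed
  qed
qed

end
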